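(* Let $X$ be a (not necessarily locally compact) Hausdorff topological vector space, let $k:X\times X\to[0,+\infty]$ be a lower semicontinuous, symmetric, convex kernel function on $X\times X$, let $H\subset X$ be a bounded set with boundary $\partial H$, and let $\mu$ be a regular Borel probability measure on $X$. Then $\sup_{x\in H}U^\mu(x)=\sup_{x\in\partial H}U^\mu(x)$, where $U^\mu(x)=\int_X k(x,y)\,d\mu(y)$. *)

theory Defs
  imports "HOL-Analysis.Analysis" "HOL-Probability.Probability"
begin

definition tvs :: "'a::{real_vector, topological_space} itself \<Rightarrow> bool" where
  "tvs _ \<longleftrightarrow>
     continuous_on UNIV (\<lambda>p::'a \<times> 'a. fst p + snd p) \<and>
     continuous_on UNIV (\<lambda>p::real \<times> 'a. fst p *\<^sub>R snd p)"

definition tvs_bounded :: "'a::{real_vector, topological_space} set \<Rightarrow> bool" where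
  "tvs_bounded H \<longleftrightarrow>
     (\<forall>U. open U \<and> (0::'a) \<in> U \<longrightarrow>
        (\<exists>s>0. \<forall>t::real. t > s \<longrightarrow> H \<subseteq> (\<lambda>u. t *\<^sub>R u) ` U))"

definition lsc :: "('a::topological_space \<Rightarrow> ennreal) \<Rightarrow> bool" where
  "lsc f \<longleftrightarrow> (\<forall>c. open {x. c < f x})"

definition convex_ennreal_fun :: "('a::real_vector \<Rightarrow> ennreal) \<Rightarrow> bool" where
  "convex_ennreal_fun f \<longleftrightarrow>
     (\<forall>p q. \<forall>t::real. 0 \<le> t \<and> t \<le> 1 \<longrightarrow>
        f ((1 - t) *\<^sub>R p + t *\<^sub>R q) \<le> ennreal (1 - t) * f p + ennreal t * f q)"

definition regular_borel_measure :: "'a::topological_space measure \<Rightarrow> bool" where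
  "regular_borel_measure M \<longleftrightarrow>
     sets M = sets borel \<and>
     (\<forall>B\<in>sets M.
        emeasure M B = (SUP K\<in>{K. K \<subseteq> B \<and> compact K}. emeasure M K) \<and>
        emeasure M B = (INF U\<in>{U. B \<subseteq> U \<and> open U}. emeasure M U))"

definition potential :: "('a \<Rightarrow> 'a \<Rightarrow> ennreal) \<Rightarrow> 'a measure \<Rightarrow> 'a \<Rightarrow> ennreal" where
  "potential k \<mu> x = (\<integral>\<^sup>+ y. k x y \<partial>\<mu>)"

end

theory Submission
  imports Defs
begin

lemma choose_sum:
  fixes f :: "'i \<Rightarrow> 'j \<Rightarrow> ennreal"
  assumes "finite I" "\<And>i. i \<in> I \<Longrightarrow> J i \<noteq> {}"
  shows "c < b + (\<Sum>i\<in>I. SUP j\<in>J i. f i j) \<Longrightarrow> \<exists>ch. (\<forall>i\<in>I. ch i \<in> J i) \<and> c < b + (\<Sum>i\<in>I. f i (ch i))"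
  using assms
proof (induction I arbitrary: b rule: finite_induct)
  case empty
  then show ?case by auto
next
  case (insert i I)
  have "b + (\<Sum>i\<in>insert i I. SUP j\<in>J i. f i j) = (SUP j\<in>J i. f i j) + (b + (\<Sum>i\<in>I. SUP j\<in>J i. f i j))"
    using insert by (simp add: algebra_simps)
  also have "\<dots> = (SUP j\<in>J i. f i j + (b + (\<Sum>i\<in>I. SUP j\<in>J i. f i j)))"
    using insert by (simp add: ennreal_SUP_add_left)
  finally obtain j where j: "j \<in> J i" "c < f i j + (b + (\<Sum>i\<in>I. SUP j\<in>J i. f i j))"
    using insert.prems(1) by (auto simp: less_SUP_iff)
  then have "c < (b + f i j) + (\<Sum>i\<in>I. SUP j\<in>J i. f i j)" by (simp add: algebra_simps)
  from insert.IH[OF this] insert.prems obtain ch where ch: "\<forall>i\<in>I. ch i \<in> J i" "c < (b + f i j) + (\<Sum>i\<in>I. f i (ch i))"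
    by auto
  have "(\<Sum>l\<in>I. f l ((ch(i:=j)) l)) = (\<Sum>l\<in>I. f l (ch l))"
    using insert.hyps by (intro sum.cong) auto
  then show ?case using ch j insert.hyps
    by (intro exI[of _ "ch(i:=j)"]) (auto simp: algebra_simps)
qed

lemma kernel_meas:
  fixes k :: "'a::topological_space \<Rightarrow> 'a \<Rightarrow> ennreal"
  assumes "lsc (\<lambda>p. k (fst p) (snd p))" "sets \<mu> = sets borel"
  shows "(\<lambda>y. k z y) \<in> borel_measurable \<mu>"
proof (rule borel_measurableI_greater)
  fix a
  have sp: "space \<mu> = UNIV" using sets_eq_imp_space_eq[OF assms(2)] by simp
  have "open {p. a < k (fst p) (snd p)}" using assms(1) unfolding lsc_def by blast
  then have "open (Pair z -` {p. a < k (fst p) (snd p)})"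
    by (intro open_vimage) (auto intro: continuous_intros)
  then show "{x \<in> space \<mu>. a < k z x} \<in> sets \<mu>"
    using assms(2) sp by (auto simp: vimage_def)
qed


lemma ennreal_scale_less:
  fixes t v :: ennreal
  assumes "t < 1" "v < top" "v \<noteq> 0"
  shows "t * v < v"
proof -
  obtain r where r: "v = ennreal r" "r \<ge> 0" using assms(2) by (cases v rule: ennreal_cases) simp_all
  have rp: "r > 0" using r assms(3) by (cases "r = 0") simp_all
  obtain s where s: "t = ennreal s" "s \<ge> 0" using assms(1) by (cases t rule: ennreal_cases) simp_all
  have "s < 1" using assms(1) s by (simp add: ennreal_less_one_iff)
  then have "s * r < r" using rp by simp
  then show ?thesis using r s rp by (simp add: ennreal_mult''[symmetric] ennreal_less_iff)
qed

lemma potential_lsc: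
  fixes k :: "'a::t2_space \<Rightarrow> 'a \<Rightarrow> ennreal"
  assumes lsck: "lsc (\<lambda>p. k (fst p) (snd p))" and reg: "regular_borel_measure \<mu>"
    and c: "c < potential k \<mu> x0"
  shows "\<exists>V. open V \<and> x0 \<in> V \<and> (\<forall>x\<in>V. c < potential k \<mu> x)"
proof -
  have sets: "sets \<mu> = sets borel" using reg unfolding regular_borel_measure_def by blast
  have sp: "space \<mu> = UNIV" using sets_eq_imp_space_eq[OF sets] by simp
  have inner: "emeasure \<mu> B = (SUP K\<in>{K. K \<subseteq> B \<and> compact K}. emeasure \<mu> K)" if "B \<in> sets \<mu>" for B
    using reg that unfolding regular_borel_measure_def by blast
  have meas: "(\<lambda>y. k z y) \<in> borel_measurable \<mu>" for z
    using kernel_meas[OF lsck sets] .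
  obtain gs where gs: "\<And>i. simple_function \<mu> (gs i)" "incseq gs" "\<And>i x. gs i x < top"
      "\<And>x. (SUP i. gs i x) = k x0 x"
    using borel_measurable_implies_simple_function_sequence'[OF meas[of x0]] by blast
  have "potential k \<mu> x0 = (\<integral>\<^sup>+ y. (SUP i. gs i y) \<partial>\<mu>)"
    unfolding potential_def using gs(4) by simp
  also have "\<dots> = (SUP i. integral\<^sup>N \<mu> (gs i))"
    using gs by (intro nn_integral_monotone_convergence_SUP) (auto intro: borel_measurable_simple_function)
  finally obtain i where ci: "c < integral\<^sup>N \<mu> (gs i)"
    using c by (auto simp: less_SUP_iff)
  define g where "g = gs i"
  have sg: "simple_function \<mu> g" using gs(1) g_def by simp
  have gle: "g y \<le> k x0 y" for y
    using gs(4)[of y] g_def by (metis SUP_upper UNIV_I)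
  have gtop: "g y < top" for y using gs(3) g_def by simp
  define R where "R = g ` UNIV"
  have finR: "finite R" using sg sp unfolding simple_function_def R_def by simp
  define A where "A v = g -` {v}" for v
  have Ameas: "A v \<in> sets \<mu>" for v
    using simple_functionD(2)[OF sg, of "{v}"] sp by (simp add: A_def)
  have int_g: "integral\<^sup>N \<mu> g = (\<Sum>v\<in>R. v * emeasure \<mu> (A v))"
    using nn_integral_eq_simple_integral[OF sg] sp
    by (simp add: simple_integral_def R_def A_def)
  have "integral\<^sup>N \<mu> g = (SUP t\<in>{..<1::ennreal}. t) * integral\<^sup>N \<mu> g"
    by (simp add: Sup_lessThan)
  also have "\<dots> = (SUP t\<in>{..<1::ennreal}. t * integral\<^sup>N \<mu> g)"
    by (rule SUP_mult_right_ennreal)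
  finally have "c < (SUP t\<in>{..<1::ennreal}. t * integral\<^sup>N \<mu> g)"
    using ci g_def by simp
  then obtain t where t: "t < 1" "c < t * integral\<^sup>N \<mu> g"
    by (auto simp: less_SUP_iff)
  have "t * integral\<^sup>N \<mu> g = (\<Sum>v\<in>R. t * v * emeasure \<mu> (A v))"
    by (simp add: int_g sum_distrib_left mult.assoc)
  also have "\<dots> = (\<Sum>v\<in>R. SUP K\<in>{K. K \<subseteq> A v \<and> compact K}. t * v * emeasure \<mu> K)"
    by (intro sum.cong refl) (simp add: inner[OF Ameas] SUP_mult_left_ennreal)
  finally have c0: "c < 0 + (\<Sum>v\<in>R. SUP K\<in>{K. K \<subseteq> A v \<and> compact K}. t * v * emeasure \<mu> K)"
    using t by simp
  have ne: "{K. K \<subseteq> A v \<and> compact K} \<noteq> {}" for v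
  proof -
    have "{} \<in> {K. K \<subseteq> A v \<and> compact K}" by auto
    then show ?thesis by blast
  qed
  from choose_sum[OF finR ne c0] obtain ch where
    ch: "\<forall>v\<in>R. ch v \<in> {K. K \<subseteq> A v \<and> compact K}" "c < 0 + (\<Sum>v\<in>R. t * v * emeasure \<mu> (ch v))"
    by auto
  have chm: "ch v \<in> sets \<mu>" if "v \<in> R" for v
    using ch(1) that sets by (auto intro: borel_closed compact_imp_closed)
  have "\<exists>V. open V \<and> x0 \<in> V \<and> (\<forall>x\<in>V. \<forall>y\<in>ch v. t * v \<le> k x y)" if v: "v \<in> R" for v
  proof (cases "v = 0")
    case True
    then show ?thesis by (intro exI[of _ UNIV]) auto
  next
    case False
    have tv: "t * v < v"
      using ennreal_scale_less[OF t(1) _ False] v gtop unfolding R_def by auto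
    have sub: "{x0} \<times> ch v \<subseteq> {p. t * v < k (fst p) (snd p)}"
    proof clarsimp
      fix y assume "y \<in> ch v"
      then have "g y = v" using ch(1) v by (auto simp: A_def)
      then show "t * v < k x0 y" using tv gle[of y] by auto
    qed
    have op: "open {p. t * v < k (fst p) (snd p)}" using lsck unfolding lsc_def by blast
    have cp: "compact (ch v)" using ch(1) v by auto
    obtain X0 where X0: "x0 \<in> X0" "open X0" "X0 \<times> ch v \<subseteq> {p. t * v < k (fst p) (snd p)}"
      using Elementary_Topology.tube_lemma[OF cp op sub] by blast
    have "\<forall>x\<in>X0. \<forall>y\<in>ch v. t * v \<le> k x y"
    proof (intro ballI)
      fix x y assume "x \<in> X0" "y \<in> ch v"
      then have "(x, y) \<in> X0 \<times> ch v" by blast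
      then have "(x, y) \<in> {p. t * v < k (fst p) (snd p)}" using X0(3) by (rule rev_subsetD)
      then have "t * v < k x y" by simp
      then show "t * v \<le> k x y" by (rule less_imp_le)
    qed
    then show ?thesis using X0 by blast
  qed
  then obtain VV where VV: "\<And>v. v \<in> R \<Longrightarrow> open (VV v) \<and> x0 \<in> VV v \<and> (\<forall>x\<in>VV v. \<forall>y\<in>ch v. t * v \<le> k x y)"
    by metis
  define V where "V = (\<Inter>v\<in>R. VV v)"
  have "open V" using VV finR unfolding V_def by auto
  moreover have "x0 \<in> V" using VV unfolding V_def by auto
  moreover have "c < potential k \<mu> x" if x: "x \<in> V" for x
  proof -
    have pw: "(\<Sum>v\<in>R. t * v * indicator (ch v) y) \<le> k x y" for y
    proof (cases "\<exists>w\<in>R. y \<in> ch w")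
      case True
      then obtain w where w: "w \<in> R" "y \<in> ch w" by blast
      have "(\<Sum>v\<in>R. t * v * indicator (ch v) y) = (\<Sum>v\<in>R. if v = w then t * w else 0)"
      proof (intro sum.cong refl)
        fix v assume v: "v \<in> R"
        show "t * v * indicator (ch v) y = (if v = w then t * w else 0)"
        proof (cases "y \<in> ch v")
          case True
          then have "g y = v" "g y = w" using ch(1) v w by (auto simp: A_def)
          then show ?thesis using True by auto
        next
          case False
          then show ?thesis using w by auto
        qed
      qed
      also have "\<dots> = t * w" using w finR by simp
      also have "\<dots> \<le> k x y" using VV[OF w(1)] x w unfolding V_def by auto
      finally show ?thesis .
    next
      case False
      then show ?thesis by (auto intro!: sum.neutral)
    qed
    have "c < (\<Sum>v\<in>R. t * v * emeasure \<mu> (ch v))" using ch by simp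
    also have "\<dots> = (\<Sum>v\<in>R. \<integral>\<^sup>+ y. t * v * indicator (ch v) y \<partial>\<mu>)"
      using chm by (intro sum.cong refl) (simp add: nn_integral_cmult_indicator)
    also have "\<dots> = (\<integral>\<^sup>+ y. (\<Sum>v\<in>R. t * v * indicator (ch v) y) \<partial>\<mu>)"
      using chm by (intro nn_integral_sum[symmetric]) auto
    also have "\<dots> \<le> potential k \<mu> x"
      unfolding potential_def by (intro nn_integral_mono pw)
    finally show ?thesis .
  qed
  ultimately show ?thesis by blast
qed


lemma conv_pot:
  fixes k :: "'a::{real_vector, topological_space} \<Rightarrow> 'a \<Rightarrow> ennreal"
  assumes lsck: "lsc (\<lambda>p. k (fst p) (snd p))" and cv: "convex_ennreal_fun (\<lambda>p. k (fst p) (snd p))"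
    and sets: "sets \<mu> = sets borel" and l: "0 \<le> l" "l \<le> 1"
  shows "potential k \<mu> ((1 - l) *\<^sub>R q + l *\<^sub>R p) \<le> ennreal (1 - l) * potential k \<mu> q + ennreal l * potential k \<mu> p"
proof -
  have meas: "(\<lambda>y. k z y) \<in> borel_measurable \<mu>" for z
    using kernel_meas[OF lsck sets] .
  have pw: "k ((1 - l) *\<^sub>R q + l *\<^sub>R p) y \<le> ennreal (1 - l) * k q y + ennreal l * k p y" for y
  proof -
    have "(1 - l) *\<^sub>R (q, y) + l *\<^sub>R (p, y) = ((1 - l) *\<^sub>R q + l *\<^sub>R p, y)"
      by (simp add: scaleR_left_distrib[symmetric])
    moreover have "(\<lambda>p. k (fst p) (snd p)) ((1 - l) *\<^sub>R (q, y) + l *\<^sub>R (p, y)) \<le>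
        ennreal (1 - l) * (\<lambda>p. k (fst p) (snd p)) (q, y) + ennreal l * (\<lambda>p. k (fst p) (snd p)) (p, y)"
      using cv l unfolding convex_ennreal_fun_def by blast
    ultimately show ?thesis by simp
  qed
  have "potential k \<mu> ((1 - l) *\<^sub>R q + l *\<^sub>R p) \<le> (\<integral>\<^sup>+ y. ennreal (1 - l) * k q y + ennreal l * k p y \<partial>\<mu>)"
    unfolding potential_def by (intro nn_integral_mono pw)
  also have "\<dots> = (\<integral>\<^sup>+ y. ennreal (1 - l) * k q y \<partial>\<mu>) + (\<integral>\<^sup>+ y. ennreal l * k p y \<partial>\<mu>)"
    using meas by (intro nn_integral_add) auto
  also have "\<dots> = ennreal (1 - l) * potential k \<mu> q + ennreal l * potential k \<mu> p"
    unfolding potential_def using meas by (simp add: nn_integral_cmult)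
  finally show ?thesis .
qed

lemma scale_cont:
  fixes w :: "'a::{real_vector, topological_space}"
  assumes "tvs TYPE('a)"
  shows "continuous_on UNIV (\<lambda>t::real. t *\<^sub>R w)"
proof -
  have c: "continuous_on UNIV (\<lambda>p::real \<times> 'a. fst p *\<^sub>R snd p)" using assms unfolding tvs_def by blast
  have "continuous_on UNIV (\<lambda>t::real. (t, w))" by (intro continuous_intros)
  from continuous_on_compose[OF this continuous_on_subset[OF c]]
  show ?thesis by (simp add: o_def)
qed

lemma frontier_Sup:
  fixes w :: "'a::{real_vector, topological_space}"
  assumes tvs: "tvs TYPE('a)" and ne: "{t. t *\<^sub>R w \<in> H} \<noteq> {}" and bdd: "bdd_above {t. t *\<^sub>R w \<in> H}"
  shows "Sup {t. t *\<^sub>R w \<in> H} *\<^sub>R w \<in> frontier H"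
proof -
  define T where "T = {t. t *\<^sub>R w \<in> H}"
  define f where "f = (\<lambda>t::real. t *\<^sub>R w)"
  have fc: "continuous_on UNIV f" unfolding f_def using scale_cont[OF tvs] .
  define b where "b = Sup T"
  have "b \<in> closure T" unfolding b_def T_def using closure_contains_Sup[OF ne bdd] .
  then have "f b \<in> f ` closure T" by blast
  also have "\<dots> \<subseteq> closure (f ` T)" using continuous_image_closure_subset[OF fc] by blast
  also have "\<dots> \<subseteq> closure H" by (intro closure_mono) (auto simp: T_def f_def)
  finally have cl: "f b \<in> closure H" .
  have "f b \<notin> interior H"
  proof
    assume fi: "f b \<in> interior H"
    have "open (f -` interior H)" using fc by (intro open_vimage) auto
    moreover have "b \<in> f -` interior H" using fi by simp
    ultimately obtain e where e: "e > 0" "ball b e \<subseteq> f -` interior H"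
      using open_contains_ball by blast
    have "b + e / 2 \<in> ball b e" using e by (simp add: dist_real_def)
    then have "f (b + e / 2) \<in> H" using e interior_subset by blast
    then have "b + e / 2 \<in> T" by (simp add: T_def f_def)
    then have "b + e / 2 \<le> b" unfolding b_def using bdd T_def by (intro cSup_upper) auto
    then show False using e by simp
  qed
  with cl show ?thesis by (simp add: frontier_def b_def T_def f_def)
qed

lemma bdd_line:
  fixes v :: "'a::{real_vector, t2_space}"
  assumes "tvs_bounded H" "v \<noteq> 0"
  shows "bdd_above {t. t *\<^sub>R v \<in> H}"
proof -
  have "open (- {v})" by (intro open_Compl closed_singleton)
  moreover have "(0::'a) \<in> - {v}" using assms by auto
  ultimately obtain s where s: "s > 0" "\<forall>t::real. t > s \<longrightarrow> H \<subseteq> (\<lambda>u. t *\<^sub>R u) ` (- {v})"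
    using assms(1) unfolding tvs_bounded_def by blast
  have "t \<le> s" if "t *\<^sub>R v \<in> H" for t
  proof (rule ccontr)
    assume "\<not> t \<le> s"
    then have "t > s" by simp
    with s that obtain u where u: "u \<noteq> v" "t *\<^sub>R v = t *\<^sub>R u" by blast
    then show False using \<open>t > s\<close> s(1) by simp
  qed
  then show ?thesis by (intro bdd_aboveI[of _ s]) auto
qed


theorem lemma3p7:
  fixes k :: "'a::{real_vector, t2_space} \<Rightarrow> 'a \<Rightarrow> ennreal"
    and H :: "'a set"
    and \<mu> :: "'a measure"
  assumes "tvs TYPE('a)"
    and "\<exists>x::'a. x \<noteq> 0"
    and "lsc (\<lambda>p. k (fst p) (snd p))"
    and "\<And>x y. k x y = k y x"
    and "convex_ennreal_fun (\<lambda>p. k (fst p) (snd p))"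
    and "tvs_bounded H"
    and "regular_borel_measure \<mu>"
    and "prob_space \<mu>"
  shows "(SUP x\<in>H. potential k \<mu> x) = (SUP x\<in>frontier H. potential k \<mu> x)"
proof (rule antisym)
  have sets: "sets \<mu> = sets borel" using assms(7) unfolding regular_borel_measure_def by blast
  define S where "S = (SUP x\<in>frontier H. potential k \<mu> x)"
  show "(SUP x\<in>H. potential k \<mu> x) \<le> (SUP x\<in>frontier H. potential k \<mu> x)"
  proof (rule SUP_least)
    fix x assume xH: "x \<in> H"
    obtain v a where va: "v \<noteq> 0" "x = a *\<^sub>R v"
    proof (cases "x = 0")
      case True
      from assms(2) obtain v :: 'a where "v \<noteq> 0" by blast
      then show ?thesis using that[of v 0] True by simp
    next
      case False
      then show ?thesis using that[of x 1] by simp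
    qed
    define T where "T = {t. t *\<^sub>R v \<in> H}"
    define T' where "T' = {t. t *\<^sub>R (- v) \<in> H}"
    have aT: "a \<in> T" using xH va by (simp add: T_def)
    have aT': "- a \<in> T'" using xH va by (simp add: T'_def)
    have bT: "bdd_above T" unfolding T_def using bdd_line[OF assms(6) va(1)] .
    have bT': "bdd_above T'" unfolding T'_def using bdd_line[OF assms(6), of "- v"] va(1) by simp
    define b where "b = Sup T"
    define b' where "b' = Sup T'"
    have ab: "a \<le> b" unfolding b_def using aT bT by (intro cSup_upper)
    have ab': "- a \<le> b'" unfolding b'_def using aT' bT' by (intro cSup_upper)
    define p where "p = b *\<^sub>R v"
    define q where "q = b' *\<^sub>R (- v)"
    have pF: "p \<in> frontier H" unfolding p_def b_def T_def
      using frontier_Sup[OF assms(1)] aT bT unfolding T_def by blast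
    have qF: "q \<in> frontier H" unfolding q_def b'_def T'_def
      using frontier_Sup[OF assms(1)] aT' bT' unfolding T'_def by blast
    have Up: "potential k \<mu> p \<le> S" unfolding S_def using pF by (rule SUP_upper)
    have Uq: "potential k \<mu> q \<le> S" unfolding S_def using qF by (rule SUP_upper)
    have "potential k \<mu> x \<le> S"
    proof (cases "b + b' = 0")
      case True
      then have "a = b" using ab ab' by linarith
      then show ?thesis using Up va by (simp add: p_def)
    next
      case False
      then have pos: "b + b' > 0" using ab ab' by linarith
      define l where "l = (a + b') / (b + b')"
      have l: "0 \<le> l" "l \<le> 1" unfolding l_def using pos ab ab' by (auto simp: field_simps)
      have lb: "l * (b + b') = a + b'" unfolding l_def using pos by simp
      have "(1 - l) * (- b') + l * b = - b' + l * (b + b')" by (simp add: algebra_simps)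
      then have "(1 - l) * (- b') + l * b = a" using lb by simp
      then have "(1 - l) *\<^sub>R q + l *\<^sub>R p = x"
        unfolding p_def q_def va(2) by (simp add: scaleR_left_diff_distrib[symmetric])
      then have "potential k \<mu> x \<le> ennreal (1 - l) * potential k \<mu> q + ennreal l * potential k \<mu> p"
        using conv_pot[OF assms(3) assms(5) sets l, of q p] by simp
      also have "\<dots> \<le> ennreal (1 - l) * S + ennreal l * S"
        by (intro add_mono mult_left_mono Up Uq) auto
      also have "\<dots> = (ennreal (1 - l) + ennreal l) * S" by (simp add: distrib_right)
      also have "\<dots> = S" using l by (simp add: ennreal_plus[symmetric])
      finally show ?thesis .
    qed
    then show "potential k \<mu> x \<le> (SUP x\<in>frontier H. potential k \<mu> x)" by (simp add: S_def)
  qed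
  show "(SUP x\<in>frontier H. potential k \<mu> x) \<le> (SUP x\<in>H. potential k \<mu> x)"
  proof (rule SUP_least)
    fix z assume zF: "z \<in> frontier H"
    show "potential k \<mu> z \<le> (SUP x\<in>H. potential k \<mu> x)"
    proof (rule ccontr)
      assume "\<not> ?thesis"
      then have "(SUP x\<in>H. potential k \<mu> x) < potential k \<mu> z" by simp
      from potential_lsc[OF assms(3) assms(7) this] obtain V where
        V: "open V" "z \<in> V" "\<forall>x\<in>V. (SUP x\<in>H. potential k \<mu> x) < potential k \<mu> x" by blast
      have "z \<in> closure H" using zF by (simp add: frontier_def)
      then have "V \<inter> closure H \<noteq> {}" using V by blast
      then have "V \<inter> H \<noteq> {}" using open_Int_closure_eq_empty[OF V(1)] by blast
      then obtain x where x: "x \<in> V" "x \<in> H" by blast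
      then have "potential k \<mu> x \<le> (SUP x\<in>H. potential k \<mu> x)" by (intro SUP_upper)
      then show False using V(3) x by (simp add: not_less[symmetric])
    qed
  qed
qed

end
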